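(* Let \(E\in\mathcal{B}_\infty\) with \(\mu(E)<\infty\). Then the restricted space \((E,\mu)\) is purely nonatomic.
   Context: Let $\mathcal{B}$ be the Borel $\sigma$-algebra of $\mathbb{R}$, $\lambda$ the Lebesgue measure, and $\mathcal{B}_{\infty}$ the $\sigma$-algebra on $\mathbb{R}^{\mathbb{N}}$ generated by the cylinder sets $\prod_{i=1}^{m}C_{i}\times\prod_{i=m+1}^{\infty}\mathbb{R}$ with $C_i\in\mathcal{B}$, $m\in\mathbb{N}$. Let $\mathcal{F}(\mathcal{B},\lambda)$ be the set of finite rectangles $\prod_{i\in\mathbb{N}}C_{i}$ with $C_i\in\mathcal{B}$ and $\prod_{i}\lambda(C_i)\in[0,\infty)$, with $\mathrm{vol}(\prod_{i}C_i):=\prod_i\lambda(C_i)$. The measure $\mu$ is the restriction to $\mathcal{B}_{\infty}$ of the outer measure $\mu^{\ast}(A):=\inf\{\sum_{n}\mathrm{vol}(\mathscr{C}_{n}) : \mathscr{C}_{n}\in\mathcal{F}(\mathcal{B},\lambda),\ A\subset\bigcup_{n}\mathscr{C}_{n}\}$ ($\inf\varnothing=\infty$). A measure space is purely nonatomic if it has no atoms, i.e., no measurable $A$ with positive measure such that every measurable $B\subset A$ has measure $0$ or that of $A$. *)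

theory Defs
  imports "HOL-Analysis.Analysis"
begin

text \<open>Points of R^N are sequences \<open>nat \<Rightarrow> real\<close> (coordinates indexed from 0).\<close>

definition cylinders :: "(nat \<Rightarrow> real) set set" where
  "cylinders = {{x. \<forall>i<m. x i \<in> C i} | m C. \<forall>i<m. C i \<in> sets borel}"

definition B_inf :: "(nat \<Rightarrow> real) set set" where
  "B_inf = sigma_sets UNIV cylinders"

definition rect :: "(nat \<Rightarrow> real set) \<Rightarrow> (nat \<Rightarrow> real) set" where
  "rect C = {x. \<forall>i. x i \<in> C i}"

definition rect_vol :: "(nat \<Rightarrow> real set) \<Rightarrow> ennreal" where
  "rect_vol C = lim (\<lambda>n. \<Prod>i<n. emeasure lborel (C i))"

definition finite_rect :: "(nat \<Rightarrow> real set) \<Rightarrow> bool" where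
  "finite_rect C \<longleftrightarrow> (\<forall>i. C i \<in> sets borel) \<and>
     (\<exists>v::ennreal. v < \<infinity> \<and> (\<lambda>n. \<Prod>i<n. emeasure lborel (C i)) \<longlonglongrightarrow> v)"

text \<open>The outer measure mu*; Inf of the empty set in ennreal is \<infinity>.\<close>
definition mu_outer :: "(nat \<Rightarrow> real) set \<Rightarrow> ennreal" where
  "mu_outer A = (INF R \<in> {R :: nat \<Rightarrow> nat \<Rightarrow> real set.
      (\<forall>n. finite_rect (R n)) \<and> A \<subseteq> (\<Union>n. rect (R n))}. \<Sum>n. rect_vol (R n))"

text \<open>The measure mu is mu* restricted to B_inf.\<close>

definition is_atom_in :: "(nat \<Rightarrow> real) set \<Rightarrow> (nat \<Rightarrow> real) set \<Rightarrow> bool" where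
  "is_atom_in E A \<longleftrightarrow> A \<in> B_inf \<and> A \<subseteq> E \<and> mu_outer A > 0 \<and>
     (\<forall>B. B \<in> B_inf \<and> B \<subseteq> A \<longrightarrow> mu_outer B = 0 \<or> mu_outer B = mu_outer A)"

definition purely_nonatomic_on :: "(nat \<Rightarrow> real) set \<Rightarrow> bool" where
  "purely_nonatomic_on E \<longleftrightarrow> \<not> (\<exists>A. is_atom_in E A)"

end

theory Submission
  imports Defs "HOL-Analysis.Analysis"
begin
lemma mu_mono: "A \<subseteq> B \<Longrightarrow> mu_outer A \<le> mu_outer B"
  unfolding mu_outer_def by (rule INF_superset_mono) auto

lemma mu_cover: "(\<And>n. finite_rect (R n)) \<Longrightarrow> A \<subseteq> (\<Union>n. rect (R n)) \<Longrightarrow> mu_outer A \<le> (\<Sum>n. rect_vol (R n))"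
  unfolding mu_outer_def by (rule INF_lower) auto

lemma mu_less_cover:
  assumes "mu_outer A < c"
  obtains R where "\<And>n. finite_rect (R n)" "A \<subseteq> (\<Union>n. rect (R n))" "(\<Sum>n. rect_vol (R n)) < c"
  using assms unfolding mu_outer_def by (auto simp: INF_less_iff)

lemma mu_null_union:
  fixes A :: "nat \<Rightarrow> (nat \<Rightarrow> real) set"
  assumes A0: "\<And>k. mu_outer (A k) = 0"
  shows "mu_outer (\<Union>k. A k) = 0"
proof -
  have main: "mu_outer (\<Union>k. A k) \<le> 0 + ennreal e" if e: "e > 0" for e
  proof -
    define w where "w k = e * (1/2::real)^Suc k" for k
    have w0: "0 < w k" for k unfolding w_def using e by simp
    have "\<exists>R. (\<forall>n. finite_rect (R n)) \<and> A k \<subseteq> (\<Union>n. rect (R n)) \<and> (\<Sum>n. rect_vol (R n)) < ennreal (w k)" for k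
    proof -
      have lt: "mu_outer (A k) < ennreal (w k)" by (simp only: A0 ennreal_less_zero_iff w0)
      obtain R where a: "\<And>n. finite_rect (R n)" and b: "A k \<subseteq> (\<Union>n. rect (R n))"
        and c: "(\<Sum>n. rect_vol (R n)) < ennreal (w k)" by (rule mu_less_cover[OF lt]) blast
      show ?thesis by (rule exI[of _ R]) (intro conjI allI a b c)
    qed
    then have "\<exists>R. \<forall>k. (\<forall>n. finite_rect (R k n)) \<and> A k \<subseteq> (\<Union>n. rect (R k n)) \<and> (\<Sum>n. rect_vol (R k n)) < ennreal (w k)"
      by (rule choice[OF allI])
    then obtain R where R0: "\<forall>k. (\<forall>n. finite_rect (R k n)) \<and> A k \<subseteq> (\<Union>n. rect (R k n)) \<and> (\<Sum>n. rect_vol (R k n)) < ennreal (w k)"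
      by (elim exE)
    have R1: "\<And>k n. finite_rect (R k n)" using R0 by blast
    have R2: "\<And>k. A k \<subseteq> (\<Union>n. rect (R k n))" using R0 by blast
    have R3: "\<And>k. (\<Sum>n. rect_vol (R k n)) < ennreal (w k)" using R0 by blast
    define Q where "Q m = R (fst (prod_decode m)) (snd (prod_decode m))" for m
    have "mu_outer (\<Union>k. A k) \<le> (\<Sum>m. rect_vol (Q m))"
    proof (rule mu_cover)
      show "finite_rect (Q n)" for n unfolding Q_def by (rule R1)
      show "(\<Union>k. A k) \<subseteq> (\<Union>n. rect (Q n))"
      proof
        fix x assume "x \<in> (\<Union>k. A k)"
        then obtain k n where xr: "x \<in> rect (R k n)" using R2 by blast
        have "Q (prod_encode (k, n)) = R k n" unfolding Q_def by (simp only: prod_encode_inverse fst_conv snd_conv)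
        then have "x \<in> rect (Q (prod_encode (k, n)))" using xr by (simp only:)
        then show "x \<in> (\<Union>n. rect (Q n))" by blast
      qed
    qed
    also have "(\<Sum>m. rect_vol (Q m)) = (\<Sum>k. \<Sum>n. rect_vol (R k n))"
      unfolding Q_def by (rule suminf_ennreal_2dimen[where f="\<lambda>p. rect_vol (R (fst p) (snd p))"]) (simp only: fst_conv snd_conv)
    also have "\<dots> \<le> (\<Sum>k. ennreal (w k))"
      by (rule suminf_le) (rule less_imp_le[OF R3], rule summableI, rule summableI)
    also have "\<dots> = ennreal e"
    proof -
      have su: "w sums e" unfolding w_def using sums_mult[OF power_half_series, of e] by (simp only: mult_1_right)
      have nn: "0 \<le> w k" for k using w0[of k] by (rule less_imp_le)
      have "(\<Sum>k. ennreal (w k)) = ennreal (\<Sum>k. w k)"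
        by (rule suminf_ennreal2[OF nn sums_summable[OF su]])
      also have "(\<Sum>k. w k) = e" by (rule sums_unique[symmetric, OF su])
      finally show ?thesis .
    qed
    finally show ?thesis by (simp only: add_0_left)
  qed
  have "mu_outer (\<Union>k. A k) \<le> 0" by (rule ennreal_le_epsilon) (rule main)
  then show ?thesis by (simp only: le_zero_eq)
qed

lemma rect_vol_eq: "(\<lambda>n. \<Prod>i<n. emeasure lborel (C i)) \<longlonglongrightarrow> v \<Longrightarrow> rect_vol C = v"
  by (simp add: rect_vol_def limI)

lemma slice:
  assumes "finite_rect C"
  shows "\<exists>K<\<infinity>. \<forall>I\<in>sets borel. finite_rect (C(0:=C 0 \<inter> I)) \<and>
     rect_vol (C(0:=C 0 \<inter> I)) \<le> rect_vol C \<and> rect_vol (C(0:=C 0 \<inter> I)) \<le> emeasure lborel I * K"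
proof -
  define P where "P n = (\<Prod>i<n. emeasure lborel (C i))" for n
  obtain v where v: "v < \<infinity>" "P \<longlonglongrightarrow> v" using assms unfolding finite_rect_def P_def by auto
  have bor: "\<And>i. C i \<in> sets borel" using assms unfolding finite_rect_def by auto
  have rv: "rect_vol C = v" using v(2) unfolding P_def by (rule rect_vol_eq)
  define a where "a = emeasure lborel (C 0)"
  define T where "T n = (\<Prod>i<n. emeasure lborel (C (Suc i)))" for n
  define C' where "C' I = C(0:=C 0 \<inter> I)" for I
  define P' where "P' I n = (\<Prod>i<n. emeasure lborel (C' I i))" for I n
  have PS: "P (Suc n) = a * T n" for n unfolding P_def a_def T_def by (subst prod.lessThan_Suc_shift) simp
  have PS': "P' I (Suc n) = emeasure lborel (C 0 \<inter> I) * T n" for I n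
    unfolding P'_def C'_def T_def by (subst prod.lessThan_Suc_shift) simp
  have bor': "I \<in> sets borel \<Longrightarrow> C' I i \<in> sets borel" for I i using bor unfolding C'_def by auto
  have ble: "emeasure lborel (C 0 \<inter> I) \<le> a" if "I \<in> sets borel" for I
    unfolding a_def using bor that by (intro emeasure_mono) auto
  have bleI: "emeasure lborel (C 0 \<inter> I) \<le> emeasure lborel I" if "I \<in> sets borel" for I
    using bor that by (intro emeasure_mono) auto
  have fr: "finite_rect (C' I)" if "I \<in> sets borel" "P' I \<longlonglongrightarrow> w" "w < \<infinity>" for I w
    unfolding finite_rect_def using that bor' unfolding P'_def by auto
  consider "a = 0" | "a = \<infinity>" | "0 < a" "a < \<infinity>"
  proof -
    have "a = 0 \<or> a = top \<or> (0 < a \<and> a < top)"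
      by (simp only: less_top[symmetric] zero_less_iff_neq_zero) blast
    then show "(a = 0 \<Longrightarrow> thesis) \<Longrightarrow> (a = \<infinity> \<Longrightarrow> thesis) \<Longrightarrow> (0 < a \<Longrightarrow> a < \<infinity> \<Longrightarrow> thesis) \<Longrightarrow> thesis" for thesis
      by auto
  qed
  then show ?thesis
  proof cases
    case 1
    have z: "P' I \<longlonglongrightarrow> 0" if "I \<in> sets borel" for I
    proof -
      have "P' I (Suc n) = 0" for n using PS'[of I n] ble[OF that] 1 by simp
      then have "(\<lambda>n. P' I (Suc n)) \<longlonglongrightarrow> 0" by simp
      then show ?thesis by (simp add: filterlim_sequentially_Suc)
    qed
    show ?thesis
    proof (intro exI[of _ 0] conjI ballI)
      fix I :: "real set" assume I: "I \<in> sets borel"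
      have r0: "rect_vol (C(0:=C 0 \<inter> I)) = 0" using rect_vol_eq[OF z[OF I, unfolded P'_def C'_def]] .
      show "finite_rect (C(0:=C 0 \<inter> I))" using fr[OF I z[OF I]] by (simp add: C'_def)
      show "rect_vol (C(0:=C 0 \<inter> I)) \<le> rect_vol C" using r0 by simp
      show "rect_vol (C(0:=C 0 \<inter> I)) \<le> emeasure lborel I * 0" using r0 by simp
    qed simp
  next
    case 2
    obtain N where N: "\<And>n. n \<ge> N \<Longrightarrow> P n < \<infinity>"
      using order_tendstoD(2)[OF v(2) v(1)] unfolding eventually_sequentially by auto
    have z: "P' I \<longlonglongrightarrow> 0" if "I \<in> sets borel" for I
    proof (rule tendsto_eventually)
      have "P' I (Suc n) = 0" if "n \<ge> N" for n
      proof -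
        have "P (Suc n) < \<infinity>" using N that by simp
        then have "T n = 0" using PS[of n] 2 by (simp add: ennreal_top_mult split: if_splits)
        then show ?thesis using PS' by simp
      qed
      then show "eventually (\<lambda>n. P' I n = 0) sequentially"
        unfolding eventually_sequentially by (metis Suc_le_D Suc_le_mono)
    qed
    show ?thesis
    proof (intro exI[of _ 0] conjI ballI)
      fix I :: "real set" assume I: "I \<in> sets borel"
      have r0: "rect_vol (C(0:=C 0 \<inter> I)) = 0" using rect_vol_eq[OF z[OF I, unfolded P'_def C'_def]] .
      show "finite_rect (C(0:=C 0 \<inter> I))" using fr[OF I z[OF I]] by (simp add: C'_def)
      show "rect_vol (C(0:=C 0 \<inter> I)) \<le> rect_vol C" using r0 by simp
      show "rect_vol (C(0:=C 0 \<inter> I)) \<le> emeasure lborel I * 0" using r0 by simp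
    qed simp
  next
    case 3
    show ?thesis
    proof (intro exI[of _ "v / a"] conjI ballI)
      show "v / a < \<infinity>" using v(1) 3 unfolding infinity_ennreal_def less_top[symmetric] by (auto simp: ennreal_divide_eq_top_iff)
      fix I :: "real set" assume I: "I \<in> sets borel"
      define b where "b = emeasure lborel (C 0 \<inter> I)"
      have ba: "b \<le> a" using ble[OF I] b_def by simp
      have bat: "b / a < \<infinity>" using 3 ba unfolding infinity_ennreal_def less_top[symmetric] by (auto simp: ennreal_divide_eq_top_iff top_unique)
      have "P' I (Suc n) = b / a * P (Suc n)" for n
      proof -
        have "b / a * P (Suc n) = b / a * a * T n" by (simp add: PS mult.assoc)
        also have "b / a * a = b" using 3
          by (simp add: ennreal_divide_times)
        finally show ?thesis using PS' b_def by simp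
      qed
      moreover have "(\<lambda>n. b / a * P (Suc n)) \<longlonglongrightarrow> b / a * v"
        by (rule ennreal_tendsto_cmult[OF bat[unfolded infinity_ennreal_def]]) (rule LIMSEQ_Suc[OF v(2)])
      ultimately have "(\<lambda>n. P' I (Suc n)) \<longlonglongrightarrow> b / a * v" by simp
      then have conv: "P' I \<longlonglongrightarrow> b / a * v" by (simp add: filterlim_sequentially_Suc)
      have fin: "b / a * v < \<infinity>" using bat v(1) by (simp add: ennreal_mult_less_top)
      have rv': "rect_vol (C(0:=C 0 \<inter> I)) = b / a * v"
        using rect_vol_eq[OF conv[unfolded P'_def]] by (simp only: C'_def)
      show "finite_rect (C(0:=C 0 \<inter> I))" using fr[OF I conv fin] by (simp add: C'_def)
      have "b / a \<le> 1" using 3 ba by (intro divide_le_posI_ennreal) auto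
      then have "b / a * v \<le> 1 * v" by (intro mult_right_mono) auto
      then show "rect_vol (C(0:=C 0 \<inter> I)) \<le> rect_vol C" using rv rv' by simp
      have "b / a * v = b * (v / a)" by (simp add: ennreal_divide_times)
      also have "\<dots> \<le> emeasure lborel I * (v / a)" using bleI[OF I] b_def by (intro mult_right_mono) auto
      finally show "rect_vol (C(0:=C 0 \<inter> I)) \<le> emeasure lborel I * (v / a)" using rv' by simp
    qed
  qed
qed

lemma small_sum:
  fixes v k :: "nat \<Rightarrow> real"
  assumes v0: "\<And>n. 0 \<le> v n" and k0: "\<And>n. 0 \<le> k n" and sv: "summable v" and c: "c > 0"
  shows "\<exists>\<delta>>0. summable (\<lambda>n. min (v n) (\<delta> * k n)) \<and> (\<Sum>n. min (v n) (\<delta> * k n)) < c"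
proof -
  obtain N where N: "\<bar>\<Sum>i. v (i + N)\<bar> < c / 2"
    using suminf_exist_split[of "c/2" v] c sv by auto
  define S where "S = (\<Sum>i<N. k i)"
  have S0: "S \<ge> 0" unfolding S_def using k0 by (simp add: sum_nonneg)
  define \<delta> where "\<delta> = c / (2 * (S + 1))"
  have d0: "\<delta> > 0" unfolding \<delta>_def using c S0 by simp
  define m where "m n = min (v n) (\<delta> * k n)" for n
  have m0: "0 \<le> m n" for n unfolding m_def using v0 k0 d0 by simp
  have mv: "m n \<le> v n" for n unfolding m_def by simp
  have sm: "summable m"
    by (rule summable_comparison_test'[OF sv, of 0]) (use m0 mv in auto)
  have "(\<Sum>n. m n) = (\<Sum>n. m (n + N)) + (\<Sum>i<N. m i)"
    by (rule suminf_split_initial_segment[OF sm])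
  also have "(\<Sum>n. m (n + N)) \<le> (\<Sum>n. v (n + N))"
    by (rule suminf_le) (use mv summable_ignore_initial_segment[OF sm] summable_ignore_initial_segment[OF sv] in auto)
  also have "(\<Sum>i<N. m i) \<le> (\<Sum>i<N. \<delta> * k i)"
    by (rule sum_mono) (simp add: m_def)
  also have "(\<Sum>i<N. \<delta> * k i) = \<delta> * S" by (simp add: S_def sum_distrib_left)
  also have "\<delta> * S < c / 2"
  proof -
    have "\<delta> * S = c / 2 * (S / (S + 1))" unfolding \<delta>_def using S0 by (simp add: field_simps)
    also have "\<dots> < c / 2 * 1" using S0 c by (intro mult_strict_left_mono) auto
    finally show ?thesis by simp
  qed
  finally have "(\<Sum>n. m n) < c" using N by linarith
  then show ?thesis using d0 sm unfolding m_def by blast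
qed


lemma B_inf_slab: "J \<in> sets borel \<Longrightarrow> {x. x 0 \<in> J} \<in> B_inf"
proof -
  assume J: "J \<in> sets borel"
  have "{x::nat\<Rightarrow>real. x 0 \<in> J} = {x. \<forall>i<1. x i \<in> (\<lambda>_. J) i}" by auto
  also have "\<dots> \<in> cylinders" unfolding cylinders_def
    by (rule CollectI, rule exI[of _ 1], rule exI[of _ "\<lambda>_. J"]) (simp add: J)
  finally show ?thesis unfolding B_inf_def by (rule sigma_sets.Basic)
qed

lemma B_inf_Int: "A \<in> B_inf \<Longrightarrow> B \<in> B_inf \<Longrightarrow> A \<inter> B \<in> B_inf"
proof -
  have "sigma_algebra UNIV B_inf" unfolding B_inf_def by (rule sigma_algebra_sigma_sets) auto
  then interpret sigma_algebra UNIV B_inf .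
  show "A \<in> B_inf \<Longrightarrow> B \<in> B_inf \<Longrightarrow> A \<inter> B \<in> B_inf" by (rule Int)
qed

theorem propositionA5:
  assumes "E \<in> B_inf" and "mu_outer E < \<infinity>"
  shows "purely_nonatomic_on E"
  unfolding purely_nonatomic_on_def
proof
  assume "\<exists>A. is_atom_in E A"
  then obtain A where AB: "A \<in> B_inf" and AE: "A \<subseteq> E" and Apos: "mu_outer A > 0"
    and atom: "\<And>B. B \<in> B_inf \<Longrightarrow> B \<subseteq> A \<Longrightarrow> mu_outer B = 0 \<or> mu_outer B = mu_outer A"
    unfolding is_atom_in_def by blast
  have Afin: "mu_outer A < \<infinity>" using mu_mono[OF AE] assms(2) by (rule le_less_trans)
  obtain R where Rf: "\<And>n. finite_rect (R n)" and Rc: "A \<subseteq> (\<Union>n. rect (R n))"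
    and Rs: "(\<Sum>n. rect_vol (R n)) < \<infinity>"
    by (rule mu_less_cover[OF Afin]) blast
  obtain K where K: "\<And>n. K n < \<infinity>" and
    Ks: "\<And>n I. I \<in> sets borel \<Longrightarrow> finite_rect ((R n)(0:=R n 0 \<inter> I)) \<and>
     rect_vol ((R n)(0:=R n 0 \<inter> I)) \<le> rect_vol (R n) \<and>
     rect_vol ((R n)(0:=R n 0 \<inter> I)) \<le> emeasure lborel I * K n"
    using slice[OF Rf] by metis
  define v where "v n = enn2real (rect_vol (R n))" for n
  define k where "k n = enn2real (K n)" for n
  have vle: "rect_vol (R n) \<le> (\<Sum>n. rect_vol (R n))" for n
    using sum_le_suminf[of "\<lambda>n. rect_vol (R n)" "{n}"] by auto
  have vE: "rect_vol (R n) = ennreal (v n)" for n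
    unfolding v_def using le_less_trans[OF vle Rs] by (simp add: ennreal_enn2real_if less_top[symmetric])
  have kE: "K n = ennreal (k n)" for n
    unfolding k_def using K[of n] by (simp add: ennreal_enn2real_if less_top[symmetric])
  have v0: "\<And>n. 0 \<le> v n" and k0: "\<And>n. 0 \<le> k n" unfolding v_def k_def by auto
  have sv: "summable v"
    by (rule summable_suminf_not_top[OF v0]) (use Rs vE in \<open>simp add: less_top[symmetric]\<close>)
  define c where "c = enn2real (mu_outer A)"
  have cE: "mu_outer A = ennreal c" unfolding c_def using Afin by (simp add: ennreal_enn2real_if less_top[symmetric])
  have c0: "c > 0" using Apos cE by simp
  obtain \<delta> where d0: "\<delta> > 0" and sm: "summable (\<lambda>n. min (v n) (\<delta> * k n))"
    and sc: "(\<Sum>n. min (v n) (\<delta> * k n)) < c"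
    using small_sum[of v k c, OF v0 k0 sv c0] by auto
  define J where "J m = {of_int (int_decode m) * \<delta> .. (of_int (int_decode m) + 1) * \<delta>}" for m
  have Jb: "J m \<in> sets borel" for m unfolding J_def by simp
  have Jm: "emeasure lborel (J m) = ennreal \<delta>" for m
    unfolding J_def using d0 by (simp add: algebra_simps)
  define S where "S m = A \<inter> {x. x 0 \<in> J m}" for m
  have S0: "mu_outer (S m) = 0" for m
  proof -
    define R' where "R' n = (R n)(0:=R n 0 \<inter> J m)" for n
    have "mu_outer (S m) \<le> (\<Sum>n. rect_vol (R' n))"
    proof (rule mu_cover)
      show "finite_rect (R' n)" for n unfolding R'_def using Ks[OF Jb] by blast
      show "S m \<subseteq> (\<Union>n. rect (R' n))"
      proof
        fix x assume "x \<in> S m"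
        then have xA: "x \<in> A" and x0: "x 0 \<in> J m" unfolding S_def by auto
        then obtain n where "x \<in> rect (R n)" using Rc by blast
        then have "x \<in> rect (R' n)" using x0 unfolding rect_def R'_def by auto
        then show "x \<in> (\<Union>n. rect (R' n))" by blast
      qed
    qed
    also have "(\<Sum>n. rect_vol (R' n)) \<le> (\<Sum>n. ennreal (min (v n) (\<delta> * k n)))"
    proof (rule suminf_le)
      fix n
      have a: "rect_vol (R' n) \<le> ennreal (v n)" unfolding R'_def using Ks[OF Jb, of n m] vE by simp
      have b: "rect_vol (R' n) \<le> ennreal (\<delta> * k n)"
        unfolding R'_def using Ks[OF Jb, of n m] Jm kE d0 k0 by (simp add: ennreal_mult)
      show "rect_vol (R' n) \<le> ennreal (min (v n) (\<delta> * k n))"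
        using a b by (cases "v n \<le> \<delta> * k n") (auto simp: min_def)
    qed (rule summableI, rule summableI)
    also have "\<dots> = ennreal (\<Sum>n. min (v n) (\<delta> * k n))"
      by (rule suminf_ennreal2[OF _ sm]) (use v0 k0 d0 in simp)
    also have "\<dots> < mu_outer A" unfolding cE using sc c0 by (intro ennreal_lessI)
    finally have "mu_outer (S m) \<noteq> mu_outer A" by simp
    moreover have "S m \<in> B_inf" unfolding S_def by (intro B_inf_Int AB B_inf_slab Jb)
    ultimately show ?thesis using atom[of "S m"] unfolding S_def by blast
  qed
  have "A \<subseteq> (\<Union>m. S m)"
  proof
    fix x assume xA: "x \<in> A"
    define z where "z = \<lfloor>x 0 / \<delta>\<rfloor>"
    have "of_int z * \<delta> \<le> x 0" unfolding z_def using d0 by (rule floor_divide_lower)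
    moreover have "x 0 < (of_int z + 1) * \<delta>" unfolding z_def using d0 by (rule floor_divide_upper)
    ultimately have "x 0 \<in> J (int_encode z)" unfolding J_def by (simp add: int_encode_inverse)
    then show "x \<in> (\<Union>m. S m)" using xA unfolding S_def by blast
  qed
  then have "mu_outer A \<le> mu_outer (\<Union>m. S m)" by (rule mu_mono)
  also have "\<dots> = 0" by (rule mu_null_union[OF S0])
  finally show False using Apos by simp
qed

end
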